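(* Let $\lambda>0$, $t>0$, and $F(z;\lambda):=(1-z)\ln(1-z)+z\ln z+z\ln\lambda$. For any $N\in\mathbb N$, $$\left(\frac{\partial}{\partial z}\cdot\frac{-1}{{\rm i} t\,\frac{\partial F}{\partial z}}\right)^N\big((1-z)^{-1/2}\big)=\frac{(1-z)^{-(2N+1)/2}}{(-{\rm i} t)^N(\partial F/\partial z)^N}\sum_{m,n=0}^N A_{mn}z^{-m}\left(\frac{\partial F}{\partial z}\right)^{-n},$$ where the $A_{mn}$ are dyadic rationals (independent of $z,t,\lambda$) satisfying $|A_{mn}|<(3N)!$ for all $m,n$, $A_{mN}=0$ for all $m<N$, and $A_{NN}=(-1)^N(2N-1)!!$.
   Context: The operator $\big(\frac{\partial}{\partial z}\cdot\frac{-1}{{\rm i} t\,\partial F/\partial z}\big)$ means: multiply by $-1/({\rm i} t\,\partial F/\partial z)$, then differentiate with respect to $z$; its $N$-th power is its $N$-fold composition. Here $\partial F/\partial z=\ln\big(\frac{z\lambda}{1-z}\big)$ and $(2N-1)!!=(2N-1)(2N-3)\cdots3\cdot1$. *)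

theory Defs
  imports "HOL-Analysis.Analysis"
begin

definition F :: "real \<Rightarrow> real \<Rightarrow> real" where
  "F lam z = (1 - z) * ln (1 - z) + z * ln z + z * ln lam"

definition opT :: "real \<Rightarrow> real \<Rightarrow> (real \<Rightarrow> complex) \<Rightarrow> (real \<Rightarrow> complex)" where
  "opT lam t g = (\<lambda>z. vector_derivative
      (\<lambda>w. - g w / (\<i> * complex_of_real t * complex_of_real (deriv (F lam) w))) (at z))"

text \<open>Odd double factorial: oddfact N = (2N-1)!! = (2N-1)(2N-3)...3*1 (empty product for N = 0).\<close>
definition oddfact :: "nat \<Rightarrow> nat" where
  "oddfact N = (\<Prod>k<N. 2 * k + 1)"

definition dyadic :: "real \<Rightarrow> bool" where
  "dyadic x \<longleftrightarrow> (\<exists>(k::int) (e::nat). x = of_int k / 2 ^ e)"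

end

theory Submission
  imports Defs
begin


fun Ac :: "nat \<Rightarrow> nat \<Rightarrow> nat \<Rightarrow> real" where
  "Ac 0 m n = (if m = 0 \<and> n = 0 then 1 else 0)"
| "Ac (Suc k) m n = ((2 * real k + 1) / 2 + real m) * Ac k m n
     + (if m = 0 then 0 else - real (m - 1) * Ac k (m - 1) n)
     + (if m = 0 \<or> n = 0 then 0 else - (real (n - 1) + real k + 1) * Ac k (m - 1) (n - 1))"

lemma Ac_supp0: "k < m \<or> m < n \<Longrightarrow> Ac k m n = 0"
proof (induction k arbitrary: m n)
  case 0 then show ?case by auto
next
  case (Suc k)
  have a: "Ac k m n = 0" using Suc.prems by (intro Suc.IH) auto
  have b: "m = 0 \<or> Ac k (m-1) n = 0" using Suc.prems by (cases m) (auto intro: Suc.IH)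
  have c: "m = 0 \<or> n = 0 \<or> Ac k (m-1) (n-1) = 0" using Suc.prems by (cases m; cases n) (auto intro: Suc.IH)
  show ?case using a b c by auto
qed

lemma Ac_supp: "Ac k m n \<noteq> 0 \<Longrightarrow> m \<le> k \<and> n \<le> m"
  using Ac_supp0 by (meson not_le)

lemma Ac_zero1: "k < m \<Longrightarrow> Ac k m n = 0" using Ac_supp by fastforce
lemma Ac_zero2: "m < n \<Longrightarrow> Ac k m n = 0" using Ac_supp by fastforce

lemma Ac_diag: "Ac k k k = (-1) ^ k * real (oddfact k)"
proof (induction k)
  case 0 then show ?case by (simp add: oddfact_def)
next
  case (Suc k)
  have "Ac (Suc k) (Suc k) (Suc k) = - (2 * real k + 1) * Ac k k k"
    by (simp add: Ac_zero1 Ac_zero2)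
  also have "\<dots> = (-1) ^ Suc k * real (oddfact (Suc k))"
    using Suc.IH by (simp add: oddfact_def algebra_simps)
  finally show ?case .
qed

lemma Ac_dyadic: "\<exists>z::int. Ac k m n = of_int z / 2 ^ k"
proof (induction k arbitrary: m n)
  case 0 then show ?case by (rule exI[of _ "if m = 0 \<and> n = 0 then 1 else 0"]) simp
next
  case (Suc k)
  obtain a where a: "Ac k m n = of_int a / 2 ^ k" using Suc.IH by blast
  obtain b where b: "Ac k (m-1) n = of_int b / 2 ^ k" using Suc.IH by blast
  obtain c where c: "Ac k (m-1) (n-1) = of_int c / 2 ^ k" using Suc.IH by blast
  show ?case
  proof (rule exI[of _ "(2 * int k + 1 + 2 * int m) * a + (if m = 0 then 0 else - 2 * int (m - 1) * b)
     + (if m = 0 \<or> n = 0 then 0 else - 2 * (int (n - 1) + int k + 1) * c)"])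
    show "Ac (Suc k) m n = of_int ((2 * int k + 1 + 2 * int m) * a + (if m = 0 then 0 else - 2 * int (m - 1) * b)
     + (if m = 0 \<or> n = 0 then 0 else - 2 * (int (n - 1) + int k + 1) * c)) / 2 ^ Suc k"
      unfolding Ac.simps a b c by (cases "m = 0"; cases "n = 0") (simp_all add: field_simps)
  qed
qed

definition Mb :: "nat \<Rightarrow> real" where "Mb k = (\<Prod>j<k. 6 * real j + 2)"

lemma Ac_bound: "\<bar>Ac k m n\<bar> \<le> Mb k"
proof (induction k arbitrary: m n)
  case 0 then show ?case by (simp add: Mb_def)
next
  case (Suc k)
  have M0: "Mb k \<ge> 0" unfolding Mb_def by (intro prod_nonneg) auto
  show ?case
  proof (cases "m \<le> Suc k")
    case False then show ?thesis using Ac_zero1[of "Suc k" m n] M0 by (simp add: Mb_def prod_nonneg)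
  next
    case True
    have t1: "\<bar>((2 * real k + 1) / 2 + real m) * Ac k m n\<bar> \<le> (3 * real k + 1/2) * Mb k"
    proof (cases "m \<le> k")
      case True
      have "\<bar>((2 * real k + 1) / 2 + real m) * Ac k m n\<bar> = ((2 * real k + 1) / 2 + real m) * \<bar>Ac k m n\<bar>"
        by (simp add: abs_mult)
      also have "\<dots> \<le> (3 * real k + 1/2) * Mb k"
        using Suc.IH[of m n] True by (intro mult_mono) (auto simp: field_simps)
      finally show ?thesis .
    next
      case False then show ?thesis using Ac_zero1[of k m n] M0 by simp
    qed
    have t2: "\<bar>(if m = 0 then 0 else - real (m - 1) * Ac k (m - 1) n)\<bar> \<le> real k * Mb k"
    proof -
      have "\<bar>- real (m - 1) * Ac k (m - 1) n\<bar> = real (m-1) * \<bar>Ac k (m - 1) n\<bar>" by (simp add: abs_mult)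
      also have "\<dots> \<le> real k * Mb k" using Suc.IH[of "m-1" n] True M0 by (intro mult_mono) auto
      finally have "\<bar>- real (m - 1) * Ac k (m - 1) n\<bar> \<le> real k * Mb k" .
      then show ?thesis using M0 by (cases "m = 0") (simp_all only: if_True if_False, simp)
    qed
    have t3: "\<bar>(if m = 0 \<or> n = 0 then 0 else - (real (n - 1) + real k + 1) * Ac k (m - 1) (n - 1))\<bar>
       \<le> (2 * real k + 1) * Mb k"
    proof (cases "m = 0 \<or> n = 0")
      case True then show ?thesis using M0 by simp
    next
      case F: False
      show ?thesis
      proof (cases "n \<le> m")
        case False then show ?thesis using F Ac_zero2[of "m-1" "n-1" k] M0 by simp
      next
        case nm: True
        have "\<bar>- (real (n - 1) + real k + 1) * Ac k (m - 1) (n - 1)\<bar> = (real (n - 1) + real k + 1) * \<bar>Ac k (m - 1) (n - 1)\<bar>"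
          by (simp add: abs_mult)
        also have "\<dots> \<le> (2 * real k + 1) * Mb k" using Suc.IH[of "m-1" "n-1"] True nm M0 by (intro mult_mono) auto
        finally show ?thesis using F by simp
      qed
    qed
    have "\<bar>Ac (Suc k) m n\<bar> \<le> (3 * real k + 1/2) * Mb k + real k * Mb k + (2 * real k + 1) * Mb k"
      unfolding Ac.simps using t1 t2 t3 by linarith
    also have "\<dots> \<le> Mb (Suc k)" using M0 by (simp add: Mb_def algebra_simps)
    finally show ?thesis .
  qed
qed

lemma Mb_fact: "k \<ge> 1 \<Longrightarrow> 2 * Mb k \<le> fact (3 * k)"
proof (induction k rule: dec_induct)
  case base then show ?case by (simp add: Mb_def eval_nat_numeral)
next
  case (step k)
  have M0: "Mb k \<ge> 0" unfolding Mb_def by (intro prod_nonneg) auto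
  have f: "fact (3 * Suc k) = (real (3*k+3) * (3*k+2) * (3*k+1)) * (fact (3 * k) :: real)"
    by (simp add: numeral_3_eq_3 algebra_simps)
  have "2 * Mb (Suc k) = (6 * real k + 2) * (2 * Mb k)" by (simp add: Mb_def)
  also have "\<dots> \<le> (real (3*k+3) * (3*k+2) * (3*k+1)) * fact (3 * k)"
    using step.IH M0 by (intro mult_mono) (auto simp: algebra_simps)
  finally show ?case using f by simp
qed



lemma gen_alg:
  fixes R U V :: real and k m q :: nat
  assumes key: "R^2 * (U - 1) = U"
  shows "real (2*k+1) * R^(2*k) * (R^3/2) * U^m * V^(Suc q)
     + R^(2*k+1) * (real m * U^(m-1) * (- (U^2))) * V^(Suc q)
     + R^(2*k+1) * U^m * (real (Suc q) * V^q * (- (V^2 * (U * R^2))))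
   = R^(2*k+3) * (((2 * real k + 1)/2 + real m) * U^m * V^(Suc q) - real m * U^(m+1) * V^(Suc q)
       - real (Suc q) * U^(m+1) * V^(Suc q + 1))"
proof -
  have k2: "R^(2*k+3) * U^m * (U - 1) = R^(2*k+1) * U^(m+1)"
  proof -
    have "R^(2*k+3) * U^m * (U - 1) = R^(2*k+1) * U^m * (R^2 * (U - 1))"
      by (simp add: power_add algebra_simps numeral_3_eq_3 power2_eq_square)
    then show ?thesis using key by simp
  qed
  have mU: "real m * U^(m-1) * U^2 = real m * U^(m+1)"
    by (cases m) (simp_all add: power2_eq_square)
  have e1: "R^(2*k) * R^3 = R^(2*k+3)" by (simp add: power_add)
  have e2: "V^q * V^2 = V^(Suc q + 1)" by (simp add: power2_eq_square)
  have e3: "R^(2*k+1) * R^2 = R^(2*k+3)" by (simp add: power_add numeral_3_eq_3 power2_eq_square)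
  have h1: "real (2*k+1) * R^(2*k) * (R^3/2) * U^m * V^(Suc q) = ((2 * real k + 1)/2) * R^(2*k+3) * U^m * V^(Suc q)"
    using e1 by (simp add: field_simps)
  have h2: "R^(2*k+1) * (real m * U^(m-1) * (- (U^2))) * V^(Suc q) = - real m * (R^(2*k+1) * U^(m+1)) * V^(Suc q)"
    using mU by (simp add: algebra_simps) (metis mult.assoc mult.commute)
  have h3: "R^(2*k+1) * U^m * (real (Suc q) * V^q * (- (V^2 * (U * R^2)))) = - real (Suc q) * R^(2*k+3) * U^(m+1) * V^(Suc q + 1)"
  proof -
    have "R^(2*k+1) * U^m * (real (Suc q) * V^q * (- (V^2 * (U * R^2)))) = - real (Suc q) * (R^(2*k+1) * R^2) * (U^m * U) * (V^q * V^2)"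
      by (simp add: algebra_simps)
    then show ?thesis using e2 e3 by simp
  qed
  have "real (2*k+1) * R^(2*k) * (R^3/2) * U^m * V^(Suc q)
     + R^(2*k+1) * (real m * U^(m-1) * (- (U^2))) * V^(Suc q)
     + R^(2*k+1) * U^m * (real (Suc q) * V^q * (- (V^2 * (U * R^2))))
     = ((2 * real k + 1)/2) * R^(2*k+3) * U^m * V^(Suc q) - real m * (R^(2*k+3) * U^m * (U - 1)) * V^(Suc q)
       - real (Suc q) * R^(2*k+3) * U^(m+1) * V^(Suc q + 1)" unfolding h1 h2 h3 k2 by (simp add: algebra_simps)
  also have "\<dots> = R^(2*k+3) * (((2 * real k + 1)/2 + real m) * U^m * V^(Suc q) - real m * U^(m+1) * V^(Suc q)
       - real (Suc q) * U^(m+1) * V^(Suc q + 1))"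
    unfolding power_Suc2[of U m, unfolded Suc_eq_plus1] by (simp add: algebra_simps)
  finally show ?thesis .
qed



lemma gen_deriv:
  fixes r u v :: "real \<Rightarrow> real"
  assumes dr: "(r has_real_derivative r w^3/2) (at w)"
    and du: "(u has_real_derivative - (u w^2)) (at w)"
    and dv: "(v has_real_derivative - (v w^2 * (u w * r w^2))) (at w)"
    and key: "r w^2 * (u w - 1) = u w"
  shows "((\<lambda>x. r x^(2*k+1) * u x^m * v x^(Suc q)) has_real_derivative
     r w^(2*k+3) * (((2 * real k + 1)/2 + real m) * u w^m * v w^(Suc q) - real m * u w^(m+1) * v w^(Suc q)
       - real (Suc q) * u w^(m+1) * v w^(Suc q + 1))) (at w)"
proof -
  note d = DERIV_mult[OF DERIV_mult[OF DERIV_power[OF dr, of "2*k+1"] DERIV_power[OF du, of m]] DERIV_power[OF dv, of "Suc q"]]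
  show ?thesis
    apply (rule DERIV_cong[OF d])
    apply (subst gen_alg[OF key, symmetric])
    apply (simp add: algebra_simps)
    done
qed


lemma shift_sum:
  fixes f :: "nat \<Rightarrow> real"
  shows "(\<Sum>m\<le>N. (if m = 0 then 0 else f (m-1))) = (\<Sum>m\<le>N. f m) - f N"
proof (cases N)
  case 0 then show ?thesis by simp
next
  case (Suc M)
  have "(\<Sum>m\<le>N. (if m = 0 then 0 else f (m-1))) = (\<Sum>m\<le>M. f m)"
    unfolding Suc sum.atMost_Suc_shift by simp
  also have "\<dots> = (\<Sum>m\<le>N. f m) - f N" unfolding Suc by simp
  finally show ?thesis .
qed

lemma reidx:
  fixes R U V :: real
  assumes kN: "k < N"
  shows "(\<Sum>m\<le>N. \<Sum>n\<le>N. Ac k m n * (R^(2*k+3) * (((2 * real k + 1)/2 + real m) * U^m * V^(Suc (n+k))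
            - real m * U^(m+1) * V^(Suc (n+k)) - real (Suc (n+k)) * U^(m+1) * V^(Suc (n+k) + 1))))
       = R^(2 * Suc k + 1) * (\<Sum>m\<le>N. \<Sum>n\<le>N. Ac (Suc k) m n * U^m * V^(n + Suc k))"
proof -
  define c where "c m = (2 * real k + 1)/2 + real m" for m
  define G where "G m' = (\<Sum>n\<le>N. - real m' * Ac k m' n * U^(m'+1) * V^(Suc (n+k)))" for m'
  define H where "H m' n' = - (real n' + real k + 1) * Ac k m' n' * U^(m'+1) * V^(Suc (n'+k) + 1)" for m' n'
  define S1 where "S1 = (\<Sum>m\<le>N. \<Sum>n\<le>N. c m * Ac k m n * U^m * V^(Suc (n+k)))"
  have pt: "Ac (Suc k) m n * U^m * V^(n + Suc k) = c m * Ac k m n * U^m * V^(Suc (n+k))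
      + (if m = 0 then 0 else - real (m-1) * Ac k (m-1) n * U^(m-1+1) * V^(Suc (n+k)))
      + (if m = 0 then 0 else if n = 0 then 0 else H (m-1) (n-1))" for m n
    by (cases m; cases n) (simp_all add: c_def H_def algebra_simps)
  have "(\<Sum>m\<le>N. \<Sum>n\<le>N. Ac (Suc k) m n * U^m * V^(n + Suc k))
     = S1 + (\<Sum>m\<le>N. (if m = 0 then 0 else G (m-1)))
          + (\<Sum>m\<le>N. (if m = 0 then 0 else (\<Sum>n\<le>N. (if n = 0 then 0 else H (m-1) (n-1)))))"
  proof -
    have a: "(\<Sum>n\<le>N. (if m = 0 then 0 else - real (m-1) * Ac k (m-1) n * U^(m-1+1) * V^(Suc (n+k))))
        = (if m = 0 then 0 else G (m-1))" for m
      by (cases m) (simp_all add: G_def)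
    have b: "(\<Sum>n\<le>N. (if m = 0 then 0 else if n = 0 then 0 else H (m-1) (n-1)))
        = (if m = 0 then 0 else (\<Sum>n\<le>N. (if n = 0 then 0 else H (m-1) (n-1))))" for m
      by (cases m) simp_all
    show ?thesis unfolding pt sum.distrib a b S1_def by simp
  qed
  also have "(\<Sum>m\<le>N. (if m = 0 then 0 else G (m-1))) = (\<Sum>m\<le>N. G m)"
  proof -
    have "G N = 0" unfolding G_def using Ac_zero1[OF kN] by simp
    then show ?thesis by (simp add: shift_sum)
  qed
  also have "(\<Sum>m\<le>N. (if m = 0 then 0 else (\<Sum>n\<le>N. (if n = 0 then 0 else H (m-1) (n-1)))))
      = (\<Sum>m\<le>N. \<Sum>n\<le>N. H m n)"
  proof -
    have hN: "H m' N = 0" for m'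
      unfolding H_def using Ac_supp0[of k m' N] kN by (cases "k < m'") auto
    have hs: "(\<Sum>n\<le>N. (if n = 0 then 0 else H m' (n-1))) = (\<Sum>n\<le>N. H m' n)" for m'
      using shift_sum[of "H m'" N] hN by simp
    have "(\<Sum>m\<le>N. (if m = 0 then 0 else (\<Sum>n\<le>N. (if n = 0 then 0 else H (m-1) (n-1)))))
       = (\<Sum>m\<le>N. (if m = 0 then 0 else (\<Sum>n\<le>N. H (m-1) n)))" by (rule sum.cong[OF refl]) (simp only: hs)
    also have "\<dots> = (\<Sum>m\<le>N. \<Sum>n\<le>N. H m n)"
    proof -
      have "(\<Sum>n\<le>N. H N n) = 0" unfolding H_def using Ac_zero1[OF kN] by simp
      then show ?thesis using shift_sum[of "\<lambda>m. \<Sum>n\<le>N. H m n" N] by simp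
    qed
    finally show ?thesis .
  qed
  finally have E: "(\<Sum>m\<le>N. \<Sum>n\<le>N. Ac (Suc k) m n * U^m * V^(n + Suc k))
     = S1 + (\<Sum>m\<le>N. G m) + (\<Sum>m\<le>N. \<Sum>n\<le>N. H m n)" .
  have L: "(\<Sum>m\<le>N. \<Sum>n\<le>N. Ac k m n * (R^(2*k+3) * (((2 * real k + 1)/2 + real m) * U^m * V^(Suc (n+k))
            - real m * U^(m+1) * V^(Suc (n+k)) - real (Suc (n+k)) * U^(m+1) * V^(Suc (n+k) + 1))))
     = R^(2*k+3) * (S1 + (\<Sum>m\<le>N. G m) + (\<Sum>m\<le>N. \<Sum>n\<le>N. H m n))"
    unfolding S1_def G_def H_def c_def sum_distrib_left sum.distrib[symmetric]
    by (intro sum.cong refl) (simp add: algebra_simps)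
  have e: "2 * Suc k + 1 = 2*k+3" by simp
  show ?thesis unfolding L E e by (simp add: algebra_simps)
qed



definition Lf :: "real \<Rightarrow> real \<Rightarrow> real" where "Lf lam w = ln w - ln (1 - w) + ln lam"
definition rr :: "real \<Rightarrow> real" where "rr w = (1 - w) powr (-1/2)"

lemma F_deriv: "0 < w \<Longrightarrow> w < 1 \<Longrightarrow> (F lam has_real_derivative Lf lam w) (at w)"
  unfolding F_def[abs_def] Lf_def
  by (rule derivative_eq_intros refl | simp add: field_simps)+

lemma deriv_F: "0 < w \<Longrightarrow> w < 1 \<Longrightarrow> deriv (F lam) w = Lf lam w"
  using F_deriv DERIV_imp_deriv by blast

lemma Lf_deriv: "0 < w \<Longrightarrow> w < 1 \<Longrightarrow> (Lf lam has_real_derivative (1/w + 1/(1-w))) (at w)"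
  unfolding Lf_def[abs_def]
  by (rule derivative_eq_intros refl | simp add: field_simps)+

lemma rr_sq: "w < 1 \<Longrightarrow> rr w ^ 2 = inverse (1 - w)"
proof -
  assume "w < 1"
  then have "rr w ^ 2 = (1 - w) powr (-1)" unfolding rr_def by (subst powr_power) auto
  also have "\<dots> = inverse (1 - w)" using \<open>w < 1\<close> by (simp add: powr_minus)
  finally show ?thesis .
qed

lemma rr_cube: "w < 1 \<Longrightarrow> rr w ^ 3 = (1 - w) powr (-3/2)"
proof -
  assume "w < 1"
  then show ?thesis unfolding rr_def by (subst powr_power) auto
qed

lemma rr_deriv: "w < 1 \<Longrightarrow> (rr has_real_derivative rr w ^ 3 / 2) (at w)"
proof -
  assume w: "w < 1"
  have d1: "((\<lambda>x. 1 - x) has_real_derivative -1) (at w)"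
    by (rule derivative_eq_intros refl | simp)+
  have "(rr has_real_derivative (-1/2) * (1 - w) powr (-1/2 - of_nat 1) * (-1)) (at w)"
    unfolding rr_def[abs_def] using w by (intro DERIV_fun_powr[OF d1]) simp
  then have "(rr has_real_derivative (1 - w) powr (-3/2) / 2) (at w)"
    by simp
  then show ?thesis using rr_cube[OF w] by simp
qed



lemma inv_deriv: "0 < w \<Longrightarrow> ((\<lambda>x. inverse x) has_real_derivative - (inverse w ^ 2)) (at w)"
  using DERIV_inverse[of w] by (simp add: power2_eq_square)

lemma invL_deriv:
  assumes "0 < w" "w < 1" "Lf lam w \<noteq> 0"
  shows "((\<lambda>x. inverse (Lf lam x)) has_real_derivative
           - (inverse (Lf lam w) ^ 2 * (inverse w * rr w ^ 2))) (at w)"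
proof -
  have "((\<lambda>x. inverse (Lf lam x)) has_real_derivative
      - ((1/w + 1/(1-w)) * inverse (Lf lam w ^ Suc (Suc 0)))) (at w)"
    using DERIV_inverse_fun[OF Lf_deriv[OF assms(1,2)] assms(3)] .
  moreover have "(1/w + 1/(1-w)) = inverse w * rr w ^ 2"
    unfolding rr_sq[OF assms(2)] using assms by (simp add: field_simps)
  ultimately show ?thesis by (simp add: power2_eq_square mult_ac)
qed

lemma term_deriv:
  assumes w: "0 < w" "w < 1" "Lf lam w \<noteq> 0"
  shows "((\<lambda>x. rr x^(2*k+1) * inverse x^m * inverse (Lf lam x)^(Suc q)) has_real_derivative
     rr w^(2*k+3) * (((2 * real k + 1)/2 + real m) * inverse w^m * inverse (Lf lam w)^(Suc q)
       - real m * inverse w^(m+1) * inverse (Lf lam w)^(Suc q)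
       - real (Suc q) * inverse w^(m+1) * inverse (Lf lam w)^(Suc q + 1))) (at w)"
proof (rule gen_deriv[where r = rr and u = inverse and v = "\<lambda>x. inverse (Lf lam x)"])
  show "(rr has_real_derivative rr w ^ 3 / 2) (at w)" using rr_deriv w by simp
  show "(inverse has_real_derivative - (inverse w ^ 2)) (at w)" using inv_deriv[OF w(1)] by simp
  show "((\<lambda>x. inverse (Lf lam x)) has_real_derivative - ((inverse (Lf lam w))^2 * (inverse w * rr w^2))) (at w)"
    using invL_deriv[OF w] .
  show "rr w^2 * (inverse w - 1) = inverse w"
    unfolding rr_sq[OF w(2)] using w by (simp add: field_simps)
qed

definition PP :: "nat \<Rightarrow> real \<Rightarrow> nat \<Rightarrow> real \<Rightarrow> real" where
  "PP N lam k w = rr w ^ (2*k+1) * (\<Sum>m\<le>N. \<Sum>n\<le>N. Ac k m n * inverse w ^ m * inverse (Lf lam w) ^ (n + k))"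

lemma PP_step:
  assumes w: "0 < w" "w < 1" "Lf lam w \<noteq> 0" and kN: "k < N"
  shows "((\<lambda>x. PP N lam k x * inverse (Lf lam x)) has_real_derivative PP N lam (Suc k) w) (at w)"
proof -
  have eq: "PP N lam k x * inverse (Lf lam x) = (\<Sum>m\<le>N. \<Sum>n\<le>N. Ac k m n *
      (rr x^(2*k+1) * inverse x^m * inverse (Lf lam x)^(Suc (n+k))))" for x
    unfolding PP_def sum_distrib_left sum_distrib_right by (intro sum.cong refl) (simp add: algebra_simps)
  have d: "((\<lambda>x. \<Sum>m\<le>N. \<Sum>n\<le>N. Ac k m n * (rr x^(2*k+1) * inverse x^m * inverse (Lf lam x)^(Suc (n+k))))
     has_real_derivative (\<Sum>m\<le>N. \<Sum>n\<le>N. Ac k m n * (rr w^(2*k+3) * (((2 * real k + 1)/2 + real m) * inverse w^m * inverse (Lf lam w)^(Suc (n+k))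
       - real m * inverse w^(m+1) * inverse (Lf lam w)^(Suc (n+k))
       - real (Suc (n+k)) * inverse w^(m+1) * inverse (Lf lam w)^(Suc (n+k) + 1))))) (at w)"
    by (intro DERIV_sum DERIV_cmult term_deriv[OF w])
  show ?thesis
    unfolding eq using d unfolding reidx[OF kN] PP_def by simp
qed



definition US :: "real \<Rightarrow> real set" where "US lam = {0<..<1} \<inter> Lf lam -` (-{0})"

lemma US_open: "open (US lam)"
proof -
  have "continuous_on {0<..<1} (Lf lam)"
    using Lf_deriv by (intro continuous_at_imp_continuous_on ballI DERIV_isCont) auto
  then have "open (Lf lam -` (-{0}) \<inter> {0<..<1})"
    using continuous_on_open_vimage[of "{0<..<1::real}" "Lf lam"] by auto
  then show ?thesis unfolding US_def by (simp add: Int_commute)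
qed

lemma US_mem: "w \<in> US lam \<longleftrightarrow> 0 < w \<and> w < 1 \<and> Lf lam w \<noteq> 0"
  unfolding US_def by auto

lemma PP_0: "PP N lam 0 w = rr w"
proof -
  have "(\<Sum>m\<le>N. \<Sum>n\<le>N. Ac 0 m n * inverse w ^ m * inverse (Lf lam w) ^ (n + 0)) = 1"
  proof -
    have "(\<Sum>n\<le>N. Ac 0 m n * inverse w ^ m * inverse (Lf lam w) ^ (n + 0)) = (if m = 0 then 1 else 0)" for m
    proof -
      have "Ac 0 m n * inverse w ^ m * inverse (Lf lam w) ^ (n + 0) = (if n = 0 then (if m = 0 then 1 else 0) else 0)" for n
        by simp
      then show ?thesis by (simp add: sum.delta)
    qed
    then show ?thesis by simp
  qed
  then show ?thesis unfolding PP_def by simp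
qed

lemma main_ind:
  assumes t: "t > 0" and kN: "k \<le> N" and w: "w \<in> US lam"
  shows "(opT lam t ^^ k) (\<lambda>w. complex_of_real ((1 - w) powr (-1/2))) w
          = complex_of_real (PP N lam k w) / (- \<i> * complex_of_real t) ^ k"
  using kN w
proof (induction k arbitrary: w)
  case 0
  then show ?case by (simp add: PP_0 rr_def)
next
  case (Suc k)
  let ?g = "(opT lam t ^^ k) (\<lambda>w. complex_of_real ((1 - w) powr (-1/2)))"
  let ?c = "1 / (- \<i> * complex_of_real t) ^ Suc k"
  let ?f = "\<lambda>x. complex_of_real (PP N lam k x * inverse (Lf lam x)) * ?c"
  have kN: "k < N" using Suc.prems by simp
  have eqU: "?f x = - ?g x / (\<i> * complex_of_real t * complex_of_real (deriv (F lam) x))"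
    if x: "x \<in> US lam" for x
  proof -
    have x': "0 < x" "x < 1" "Lf lam x \<noteq> 0" using x US_mem by auto
    have "?g x = complex_of_real (PP N lam k x) / (- \<i> * complex_of_real t) ^ k"
      using Suc.IH[of x] kN x by simp
    moreover have "deriv (F lam) x = Lf lam x" using deriv_F x' by simp
    ultimately show ?thesis using x' t
      by (simp add: field_simps)
  qed
  have wU: "w \<in> US lam" using Suc.prems by simp
  have w': "0 < w" "w < 1" "Lf lam w \<noteq> 0" using wU US_mem by auto
  have "(?f has_vector_derivative complex_of_real (PP N lam (Suc k) w) * ?c) (at w)"
    by (intro has_vector_derivative_mult_left has_vector_derivative_of_real PP_step[OF w' kN])
  then have "((\<lambda>x. - ?g x / (\<i> * complex_of_real t * complex_of_real (deriv (F lam) x)))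
       has_vector_derivative complex_of_real (PP N lam (Suc k) w) * ?c) (at w)"
    by (rule has_vector_derivative_transform_within_open[OF _ US_open wU eqU])
  then have "opT lam t ?g w = complex_of_real (PP N lam (Suc k) w) * ?c"
    unfolding opT_def by (rule vector_derivative_at)
  then show ?case by simp
qed



lemma final_eq:
  assumes z: "0 < z" "z < 1" "Lf lam z \<noteq> 0"
  shows "complex_of_real (PP N lam N z) / (- \<i> * complex_of_real t) ^ N =
         complex_of_real ((1 - z) powr (- (2 * real N + 1) / 2))
         / ((- \<i> * complex_of_real t) ^ N * complex_of_real (Lf lam z) ^ N)
         * (\<Sum>m\<le>N. \<Sum>n\<le>N. complex_of_real
              (Ac N m n * z powi (- int m) * Lf lam z powi (- int n)))"
proof -
  have "rr z ^ (2*N+1) = (1 - z) powr (real (2*N+1) * (-1/2))"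
    unfolding rr_def using z by (subst powr_power) auto
  also have "real (2*N+1) * (-1/2) = - (2 * real N + 1) / 2" by (simp add: field_simps)
  finally have r: "rr z ^ (2*N+1) = (1 - z) powr (- (2 * real N + 1) / 2)" .
  have p: "PP N lam N z = (1 - z) powr (- (2 * real N + 1) / 2) / Lf lam z ^ N *
      (\<Sum>m\<le>N. \<Sum>n\<le>N. Ac N m n * z powi (- int m) * Lf lam z powi (- int n))"
  proof -
    have s: "(\<Sum>m\<le>N. \<Sum>n\<le>N. Ac N m n * inverse z ^ m * inverse (Lf lam z) ^ (n + N))
      = inverse (Lf lam z ^ N) * (\<Sum>m\<le>N. \<Sum>n\<le>N. Ac N m n * z powi (- int m) * Lf lam z powi (- int n))"
      unfolding sum_distrib_left
      by (intro sum.cong refl) (simp add: power_int_minus power_add power_inverse)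
    show ?thesis unfolding PP_def r s by (simp add: field_simps)
  qed
  show ?thesis unfolding p of_real_sum[symmetric] using z
    by (simp add: field_simps)
qed

theorem lemma4p6:
  fixes N :: nat
  assumes "N \<ge> 1"
  shows "\<exists>A :: nat \<Rightarrow> nat \<Rightarrow> real.
    (\<forall>m\<le>N. \<forall>n\<le>N. dyadic (A m n)) \<and>
    (\<forall>m\<le>N. \<forall>n\<le>N. \<bar>A m n\<bar> < fact (3 * N)) \<and>
    (\<forall>m<N. A m N = 0) \<and>
    A N N = (-1) ^ N * real (oddfact N) \<and>
    (\<forall>lam t z. lam > 0 \<longrightarrow> t > 0 \<longrightarrow> 0 < z \<longrightarrow> z < 1 \<longrightarrow> deriv (F lam) z \<noteq> 0 \<longrightarrow>
       (opT lam t ^^ N) (\<lambda>w. complex_of_real ((1 - w) powr (-1/2))) z =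
         complex_of_real ((1 - z) powr (- (2 * real N + 1) / 2))
         / ((- \<i> * complex_of_real t) ^ N * complex_of_real (deriv (F lam) z) ^ N)
         * (\<Sum>m\<le>N. \<Sum>n\<le>N. complex_of_real
              (A m n * z powi (- int m) * deriv (F lam) z powi (- int n))))"
proof (intro exI[of _ "Ac N"] conjI allI impI)
  fix m n assume "m \<le> N" "n \<le> N"
  obtain k :: int where "Ac N m n = of_int k / 2 ^ N" using Ac_dyadic by blast
  then show "dyadic (Ac N m n)" unfolding dyadic_def by blast
next
  fix m n assume "m \<le> N" "n \<le> N"
  have M0: "Mb N > 0" unfolding Mb_def by (intro prod_pos) auto
  have "\<bar>Ac N m n\<bar> \<le> Mb N" by (rule Ac_bound)
  also have "\<dots> < 2 * Mb N" using M0 by simp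
  also have "\<dots> \<le> fact (3 * N)" using Mb_fact assms by blast
  finally show "\<bar>Ac N m n\<bar> < fact (3 * N)" .
next
  fix m assume "m < N"
  then show "Ac N m N = 0" by (rule Ac_zero2)
next
  show "Ac N N N = (-1) ^ N * real (oddfact N)" by (rule Ac_diag)
next
  fix lam t z :: real
  assume "lam > 0" "t > 0" "0 < z" "z < 1" "deriv (F lam) z \<noteq> 0"
  then have L: "deriv (F lam) z = Lf lam z" "Lf lam z \<noteq> 0" using deriv_F by auto
  then have zU: "z \<in> US lam" using \<open>0 < z\<close> \<open>z < 1\<close> US_mem by auto
  show "(opT lam t ^^ N) (\<lambda>w. complex_of_real ((1 - w) powr (-1/2))) z =
         complex_of_real ((1 - z) powr (- (2 * real N + 1) / 2))
         / ((- \<i> * complex_of_real t) ^ N * complex_of_real (deriv (F lam) z) ^ N)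
         * (\<Sum>m\<le>N. \<Sum>n\<le>N. complex_of_real
              (Ac N m n * z powi (- int m) * deriv (F lam) z powi (- int n)))"
    unfolding main_ind[OF \<open>t > 0\<close> order.refl zU] L(1)
    using final_eq \<open>0 < z\<close> \<open>z < 1\<close> L(2) by blast
qed

end
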